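(* Fix $j$ with $\ell+1\le j\le n$, a nonzero linear form $\alpha_j=\sum_{i=1}^{\ell}a_{ji}x_i\in S=\mathbb{K}[x_1,\dots,x_\ell]$. Let $M_j\subseteq S^\ell$ be the $S$-module of all tuples $(k_1,\dots,k_\ell)\in S^\ell$ for which there exists $k_j\in S$ with $$k_j\,\alpha_j=\sum_{i=1}^{\ell}k_i\,a_{ji}x_i .$$ Then $M_j$ is generated as an $S$-module by the set $$G_j=\{e\}\cup\{e_r : a_{jr}=0\}\cup\{a_{jt}x_t\,e_s-a_{js}x_s\,e_t : a_{jt}a_{js}\neq 0\},$$ where $e=(1,1,\dots,1)$ and $e_r$ is the $r$-th standard basis vector of $S^\ell$.
   Context: This is the $j$-th equation of the system $k_j\alpha_j=\sum_{i=1}^\ell k_i(a_{ji}x_i)$, $\ell+1\le j\le n$, arising (via Theorem 2.1 / Corollary 2.2 of the paper) for an arrangement with canonical defining polynomial $Q=x_1\cdots x_\ell\,\alpha_{\ell+1}\cdots\alpha_n$, where $\theta(x_i)=k_ix_i$ and $\theta(\alpha_j)=k_j\alpha_j$ for a logarithmic derivation $\theta$. *)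

theory Defs
  imports "HOL-Library.Poly_Mapping"
begin

text \<open>Multivariate polynomials over a field K, represented as finitely supported maps
from monomials (exponent vectors, nat =>0 nat) to coefficients.
The ring S = K[x_1,...,x_l] is the subset of polynomials only involving the variables 1..l.\<close>

type_synonym 'a mpol = "(nat \<Rightarrow>\<^sub>0 nat) \<Rightarrow>\<^sub>0 'a"

definition Var :: "nat \<Rightarrow> 'a::field mpol" where
  "Var i = Poly_Mapping.single (Poly_Mapping.single i 1) 1"

definition Const :: "'a::field \<Rightarrow> 'a mpol" where
  "Const c = Poly_Mapping.single 0 c"

definition inS :: "nat \<Rightarrow> 'a::field mpol \<Rightarrow> bool" where
  "inS l p \<longleftrightarrow> (\<forall>m \<in> Poly_Mapping.keys p. Poly_Mapping.keys m \<subseteq> {1..l})"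

text \<open>elements of S^l, as functions on indices 1..l (zero elsewhere)\<close>
definition inSl :: "nat \<Rightarrow> (nat \<Rightarrow> 'a::field mpol) \<Rightarrow> bool" where
  "inSl l v \<longleftrightarrow> (\<forall>i\<in>{1..l}. inS l (v i)) \<and> (\<forall>i. i \<notin> {1..l} \<longrightarrow> v i = 0)"

definition lin_form :: "nat \<Rightarrow> (nat \<Rightarrow> 'a::field) \<Rightarrow> 'a mpol" where
  "lin_form l a = (\<Sum>i=1..l. Const (a i) * Var i)"

definition Mmod :: "nat \<Rightarrow> (nat \<Rightarrow> 'a::field) \<Rightarrow> (nat \<Rightarrow> 'a mpol) set" where
  "Mmod l a = {v. inSl l v \<and>
     (\<exists>kj. inS l kj \<and> kj * lin_form l a = (\<Sum>i=1..l. v i * (Const (a i) * Var i)))}"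

definition e_all :: "nat \<Rightarrow> nat \<Rightarrow> 'a::field mpol" where
  "e_all l = (\<lambda>i. if i \<in> {1..l} then 1 else 0)"

definition e_std :: "nat \<Rightarrow> nat \<Rightarrow> 'a::field mpol" where
  "e_std r = (\<lambda>i. if i = r then 1 else 0)"

definition Gset :: "nat \<Rightarrow> (nat \<Rightarrow> 'a::field) \<Rightarrow> (nat \<Rightarrow> 'a mpol) set" where
  "Gset l a = {e_all l} \<union> {e_std r | r. r \<in> {1..l} \<and> a r = 0}
     \<union> {(\<lambda>i. (Const (a t) * Var t) * e_std s i - (Const (a s) * Var s) * e_std t i) | s t.
          s \<in> {1..l} \<and> t \<in> {1..l} \<and> a t * a s \<noteq> 0}"

definition S_span :: "nat \<Rightarrow> (nat \<Rightarrow> 'a::field mpol) set \<Rightarrow> (nat \<Rightarrow> 'a mpol) set" where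
  "S_span l G = {v. \<exists>F c. finite F \<and> F \<subseteq> G \<and> (\<forall>g\<in>F. inS l (c g)) \<and>
                        v = (\<lambda>i. \<Sum>g\<in>F. c g * g i)}"

end

theory Submission
  imports Defs
begin

lemma keys_add_nat: "Poly_Mapping.keys (m1 + m2 :: nat \<Rightarrow>\<^sub>0 nat) = Poly_Mapping.keys m1 \<union> Poly_Mapping.keys m2"
  by (auto simp: in_keys_iff lookup_add)

lemma inS_0[simp]: "inS l 0" by (simp add: inS_def)

lemma inS_add: "inS l p \<Longrightarrow> inS l q \<Longrightarrow> inS l (p + q)"
  unfolding inS_def using keys_add[of p q] by blast

lemma inS_uminus: "inS l p \<Longrightarrow> inS l (- p)"
  unfolding inS_def by simp

lemma inS_diff: "inS l p \<Longrightarrow> inS l q \<Longrightarrow> inS l (p - q)"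
  unfolding inS_def using keys_diff[of p q] by blast

lemma inS_mult: "inS l p \<Longrightarrow> inS l q \<Longrightarrow> inS l (p * q)"
  unfolding inS_def
proof
  fix m assume p: "\<forall>m\<in>Poly_Mapping.keys p. Poly_Mapping.keys m \<subseteq> {1..l}"
    and q: "\<forall>m\<in>Poly_Mapping.keys q. Poly_Mapping.keys m \<subseteq> {1..l}"
    and m: "m \<in> Poly_Mapping.keys (p * q)"
  have "m \<in> {a + b |a b. a \<in> Poly_Mapping.keys p \<and> b \<in> Poly_Mapping.keys q}"
    by (rule subsetD[OF keys_mult m])
  then obtain a b where ab: "m = a + b" "a \<in> Poly_Mapping.keys p" "b \<in> Poly_Mapping.keys q"
    by blast
  have "Poly_Mapping.keys m = Poly_Mapping.keys a \<union> Poly_Mapping.keys b"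
    unfolding ab(1) by (rule keys_add_nat)
  then show "Poly_Mapping.keys m \<subseteq> {1..l}" using p q ab(2,3) by blast
qed

lemma inS_sum: "(\<And>x. x \<in> A \<Longrightarrow> inS l (f x)) \<Longrightarrow> inS l (\<Sum>x\<in>A. f x)"
  by (induction A rule: infinite_finite_induct) (auto intro: inS_add)

lemma inS_Const[simp]: "inS l (Const c)"
  by (simp add: inS_def Const_def)

lemma inS_one[simp]: "inS l 1"
  by (simp add: inS_def)

lemma inS_Var: "i \<in> {1..l} \<Longrightarrow> inS l (Var i)"
  by (simp add: inS_def Var_def)


definition nox :: "nat set \<Rightarrow> 'a::field mpol \<Rightarrow> bool" where
  "nox T p \<longleftrightarrow> (\<forall>m\<in>Poly_Mapping.keys p. Poly_Mapping.keys m \<inter> T = {})"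

definition allx :: "nat set \<Rightarrow> 'a::field mpol \<Rightarrow> bool" where
  "allx T p \<longleftrightarrow> (\<forall>m\<in>Poly_Mapping.keys p. Poly_Mapping.keys m \<inter> T \<noteq> {})"

lemma allx_add: "allx T p \<Longrightarrow> allx T q \<Longrightarrow> allx T (p + q)"
  unfolding allx_def using keys_add[of p q] by blast

lemma allx_sum: "(\<And>x. x \<in> A \<Longrightarrow> allx T (f x)) \<Longrightarrow> allx T (\<Sum>x\<in>A. f x)"
proof (induction A rule: infinite_finite_induct)
  case (insert x F)
  have 1: "allx T (f x)" by (rule insert.prems) simp
  have 2: "allx T (sum f F)" by (rule insert.IH, rule insert.prems) simp
  show ?case unfolding sum.insert[OF insert.hyps] using 1 2 by (rule allx_add)
qed (auto simp: allx_def)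

lemma allx_uminus: "allx T p \<Longrightarrow> allx T (- p)"
  unfolding allx_def by simp

lemma allx_Var: "t \<in> T \<Longrightarrow> allx T (p * Var t)"
  unfolding allx_def
proof
  fix m assume t: "t \<in> T" and m: "m \<in> Poly_Mapping.keys (p * Var t)"
  have "m \<in> {a + b |a b. a \<in> Poly_Mapping.keys p \<and> b \<in> Poly_Mapping.keys (Var t :: 'a mpol)}"
    by (rule subsetD[OF keys_mult m])
  then obtain a b where "m = a + b" "b \<in> Poly_Mapping.keys (Var t :: 'a mpol)"
    by blast
  then have "m = a + Poly_Mapping.single t 1" by (simp add: Var_def split: if_splits)
  then show "Poly_Mapping.keys m \<inter> T \<noteq> {}" using t by (auto simp: keys_add_nat)
qed

lemma Const_Var: "Const c * Var i = Poly_Mapping.single (Poly_Mapping.single i 1) c"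
  by (simp add: Const_def Var_def mult_single)

lemma Const_mult: "Const c * Const d = Const (c * d)"
  by (simp add: Const_def mult_single)

lemma nox_yv: assumes "nox T r" "i \<notin> T" shows "nox T (r * (Const c * Var i))"
  unfolding nox_def
proof
  fix m assume m: "m \<in> Poly_Mapping.keys (r * (Const c * Var i))"
  have "m \<in> {a + b |a b. a \<in> Poly_Mapping.keys r \<and> b \<in> Poly_Mapping.keys (Const c * Var i :: 'a mpol)}"
    by (rule subsetD[OF keys_mult m])
  then obtain a b where ab: "m = a + b" "a \<in> Poly_Mapping.keys r" "b \<in> Poly_Mapping.keys (Const c * Var i :: 'a mpol)"
    by blast
  then have "b = Poly_Mapping.single i 1" by (simp add: Const_Var split: if_splits)
  with ab assms show "Poly_Mapping.keys m \<inter> T = {}" by (auto simp: keys_add_nat nox_def)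
qed

lemma nox_allx: "nox T p \<Longrightarrow> allx T p \<Longrightarrow> p = 0"
  unfolding nox_def allx_def by (metis keys_eq_empty all_not_in_conv)

lemma update_as_add: "a \<notin> Poly_Mapping.keys f \<Longrightarrow> Poly_Mapping.update a b f = Poly_Mapping.single a b + f"
  by (rule poly_mapping_eqI) (auto simp: lookup_update lookup_add lookup_single in_keys_iff when_def)

lemma split1:
  fixes p :: "'a::field mpol"
  shows "\<exists>q r. p = Var t * q + r \<and> Poly_Mapping.keys r \<subseteq> Poly_Mapping.keys p \<and>
     (\<forall>m\<in>Poly_Mapping.keys r. t \<notin> Poly_Mapping.keys m) \<and>
     (\<forall>m\<in>Poly_Mapping.keys q. \<exists>m'\<in>Poly_Mapping.keys p. Poly_Mapping.keys m \<subseteq> Poly_Mapping.keys m')"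
proof (induction p rule: update_induct)
  case const
  show ?case by (rule exI[of _ 0], rule exI[of _ 0]) simp
next
  case (update f a b)
  from update.IH obtain q r where qr: "f = Var t * q + r" "Poly_Mapping.keys r \<subseteq> Poly_Mapping.keys f"
     "\<forall>m\<in>Poly_Mapping.keys r. t \<notin> Poly_Mapping.keys m"
     "\<forall>m\<in>Poly_Mapping.keys q. \<exists>m'\<in>Poly_Mapping.keys f. Poly_Mapping.keys m \<subseteq> Poly_Mapping.keys m'"
    by blast
  have eq: "Poly_Mapping.update a b f = Poly_Mapping.single a b + f"
    by (rule update_as_add) (rule update.hyps(1))
  have ks: "Poly_Mapping.keys (Poly_Mapping.update a b f) = insert a (Poly_Mapping.keys f)"
    using update.hyps by (auto simp: eq in_keys_iff lookup_add lookup_single when_def split: if_splits)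
  show ?case
  proof (cases "t \<in> Poly_Mapping.keys a")
    case True
    define a' where "a' = a - Poly_Mapping.single t 1"
    have aa: "Poly_Mapping.single t 1 + a' = a"
      using True by (intro poly_mapping_eqI) (auto simp: a'_def lookup_add lookup_minus lookup_single when_def in_keys_iff)
    have ka: "Poly_Mapping.keys a' \<subseteq> Poly_Mapping.keys a"
      by (auto simp: a'_def in_keys_iff lookup_minus)
    have sa: "Poly_Mapping.single a b = Var t * Poly_Mapping.single a' b"
      unfolding Var_def mult_single by (simp only: aa mult_1)
    show ?thesis
    proof (intro exI conjI)
      show "Poly_Mapping.update a b f = Var t * (Poly_Mapping.single a' b + q) + r"
        unfolding eq sa by (simp add: qr(1) algebra_simps)
      show "Poly_Mapping.keys r \<subseteq> Poly_Mapping.keys (Poly_Mapping.update a b f)"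
        using qr(2) ks by blast
      show "\<forall>m\<in>Poly_Mapping.keys r. t \<notin> Poly_Mapping.keys m" by (fact qr(3))
      show "\<forall>m\<in>Poly_Mapping.keys (Poly_Mapping.single a' b + q). \<exists>m'\<in>Poly_Mapping.keys (Poly_Mapping.update a b f). Poly_Mapping.keys m \<subseteq> Poly_Mapping.keys m'"
      proof
        fix m assume "m \<in> Poly_Mapping.keys (Poly_Mapping.single a' b + q)"
        then have "m = a' \<or> m \<in> Poly_Mapping.keys q" using keys_add[of "Poly_Mapping.single a' b" q]
          by (auto split: if_splits)
        then show "\<exists>m'\<in>Poly_Mapping.keys (Poly_Mapping.update a b f). Poly_Mapping.keys m \<subseteq> Poly_Mapping.keys m'"
          using ka qr(4) ks by blast
      qed
    qed
  next
    case False
    show ?thesis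
    proof (intro exI conjI)
      show "Poly_Mapping.update a b f = Var t * q + (Poly_Mapping.single a b + r)"
        unfolding eq by (simp add: qr(1) algebra_simps)
      show "Poly_Mapping.keys (Poly_Mapping.single a b + r) \<subseteq> Poly_Mapping.keys (Poly_Mapping.update a b f)"
        using keys_add[of "Poly_Mapping.single a b" r] qr(2) ks by (auto split: if_splits)
      show "\<forall>m\<in>Poly_Mapping.keys (Poly_Mapping.single a b + r). t \<notin> Poly_Mapping.keys m"
        using keys_add[of "Poly_Mapping.single a b" r] qr(3) False by (auto split: if_splits)
      show "\<forall>m\<in>Poly_Mapping.keys q. \<exists>m'\<in>Poly_Mapping.keys (Poly_Mapping.update a b f). Poly_Mapping.keys m \<subseteq> Poly_Mapping.keys m'"
        using qr(4) ks by blast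
    qed
  qed
qed

lemma splitT:
  fixes p :: "'a::field mpol"
  assumes "finite T"
  shows "\<exists>q r. p = (\<Sum>t\<in>T. Var t * q t) + r \<and> Poly_Mapping.keys r \<subseteq> Poly_Mapping.keys p \<and> nox T r \<and>
     (\<forall>t. \<forall>m\<in>Poly_Mapping.keys (q t). \<exists>m'\<in>Poly_Mapping.keys p. Poly_Mapping.keys m \<subseteq> Poly_Mapping.keys m')"
  using assms
proof (induction T rule: finite_induct)
  case empty
  show ?case by (rule exI[of _ "\<lambda>_. 0"], rule exI[of _ p]) (simp add: nox_def)
next
  case (insert t T)
  then obtain q r' where qr: "p = (\<Sum>t\<in>T. Var t * q t) + r'" "Poly_Mapping.keys r' \<subseteq> Poly_Mapping.keys p" "nox T r'"
     "\<forall>t. \<forall>m\<in>Poly_Mapping.keys (q t). \<exists>m'\<in>Poly_Mapping.keys p. Poly_Mapping.keys m \<subseteq> Poly_Mapping.keys m'"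
    by blast
  obtain q0 r where s: "r' = Var t * q0 + r" "Poly_Mapping.keys r \<subseteq> Poly_Mapping.keys r'"
     "\<forall>m\<in>Poly_Mapping.keys r. t \<notin> Poly_Mapping.keys m"
     "\<forall>m\<in>Poly_Mapping.keys q0. \<exists>m'\<in>Poly_Mapping.keys r'. Poly_Mapping.keys m \<subseteq> Poly_Mapping.keys m'"
    using split1[of r' t] by blast
  have sm: "(\<Sum>s\<in>insert t T. Var s * (q(t:=q0)) s) = Var t * q0 + (\<Sum>s\<in>T. Var s * q s)"
  proof -
    have c: "(\<Sum>s\<in>T. Var s * (q(t:=q0)) s) = (\<Sum>s\<in>T. Var s * q s)"
      by (rule sum.cong) (use insert.hyps in auto)
    have "(\<Sum>s\<in>insert t T. Var s * (q(t:=q0)) s) = Var t * (q(t:=q0)) t + (\<Sum>s\<in>T. Var s * (q(t:=q0)) s)"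
      by (rule sum.insert[OF insert.hyps])
    also have "\<dots> = Var t * q0 + (\<Sum>s\<in>T. Var s * q s)" by (simp only: fun_upd_same c)
    finally show ?thesis .
  qed
  show ?case
  proof (intro exI conjI)
    show "p = (\<Sum>s\<in>insert t T. Var s * (q(t:=q0)) s) + r"
      unfolding sm by (simp add: qr(1) s(1) algebra_simps)
    show "Poly_Mapping.keys r \<subseteq> Poly_Mapping.keys p" using s(2) qr(2) by blast
    show "nox (insert t T) r" using s(2,3) qr(3) unfolding nox_def by blast
    show "\<forall>s. \<forall>m\<in>Poly_Mapping.keys ((q(t:=q0)) s). \<exists>m'\<in>Poly_Mapping.keys p. Poly_Mapping.keys m \<subseteq> Poly_Mapping.keys m'"
    proof (intro allI ballI)
      fix s m assume m: "m \<in> Poly_Mapping.keys ((q(t:=q0)) s)"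
      show "\<exists>m'\<in>Poly_Mapping.keys p. Poly_Mapping.keys m \<subseteq> Poly_Mapping.keys m'"
      proof (cases "s = t")
        case True then have "m \<in> Poly_Mapping.keys q0" using m by simp
        then obtain m' where "m' \<in> Poly_Mapping.keys r'" "Poly_Mapping.keys m \<subseteq> Poly_Mapping.keys m'"
          using s(4) by blast
        then show ?thesis using qr(2) by blast
      next
        case False then show ?thesis using m qr(4) by auto
      qed
    qed
  qed
qed

lemma keys_bound_inS: "inS l p \<Longrightarrow> (\<forall>m\<in>Poly_Mapping.keys q. \<exists>m'\<in>Poly_Mapping.keys p. Poly_Mapping.keys m \<subseteq> Poly_Mapping.keys m') \<Longrightarrow> inS l q"
  unfolding inS_def by blast


definition yv :: "(nat \<Rightarrow> 'a::field) \<Rightarrow> nat \<Rightarrow> 'a mpol" where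
  "yv a i = Const (a i) * Var i"

definition lin :: "nat \<Rightarrow> (nat \<Rightarrow> 'a::field) \<Rightarrow> (nat \<Rightarrow> 'a mpol) \<Rightarrow> 'a mpol" where
  "lin l a w = (\<Sum>i=1..l. w i * yv a i)"

definition Kv :: "(nat \<Rightarrow> 'a::field) \<Rightarrow> nat \<Rightarrow> nat \<Rightarrow> nat \<Rightarrow> 'a mpol" where
  "Kv a s t = (\<lambda>i. yv a t * e_std s i - yv a s * e_std t i)"

lemma inS_yv: "i \<in> {1..l} \<Longrightarrow> inS l (yv a i)"
  by (simp add: yv_def inS_mult inS_Var)

lemma lin_add: "lin l a (\<lambda>i. u i + v i) = lin l a u + lin l a v"
  by (simp add: lin_def sum.distrib distrib_right)

lemma lin_diff: "lin l a (\<lambda>i. u i - v i) = lin l a u - lin l a v"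
  by (simp add: lin_def sum_subtractf left_diff_distrib)

lemma lin_smult: "lin l a (\<lambda>i. c * u i) = c * lin l a u"
  by (simp add: lin_def sum_distrib_left mult.assoc)

lemma lin_sum: "lin l a (\<lambda>i. \<Sum>x\<in>A. f x i) = (\<Sum>x\<in>A. lin l a (f x))"
  by (simp add: lin_def sum_distrib_right sum.swap[of _ A])

lemma lin_estd: "r \<in> {1..l} \<Longrightarrow> lin l a (\<lambda>i. c * e_std r i) = c * yv a r"
proof -
  assume r: "r \<in> {1..l}"
  have "lin l a (\<lambda>i. c * e_std r i) = (\<Sum>i=1..l. (if i = r then c * yv a r else 0))"
    unfolding lin_def by (rule sum.cong) (auto simp: e_std_def)
  also have "\<dots> = c * yv a r" using r by simp
  finally show ?thesis .
qed

lemma lin_estd1: "r \<in> {1..l} \<Longrightarrow> lin l a (e_std r) = yv a r"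
  using lin_estd[of r l a 1] by simp

lemma lin_Kv: "s \<in> {1..l} \<Longrightarrow> t \<in> {1..l} \<Longrightarrow> lin l a (Kv a s t) = 0"
  unfolding Kv_def lin_diff by (simp only: lin_estd) (simp add: algebra_simps)

lemma Kv_in_G: "s \<in> {1..l} \<Longrightarrow> t \<in> {1..l} \<Longrightarrow> a t * a s \<noteq> 0 \<Longrightarrow> Kv a s t \<in> Gset l a"
  unfolding Gset_def Kv_def yv_def by blast

lemma inSl_Kv: "s \<in> {1..l} \<Longrightarrow> t \<in> {1..l} \<Longrightarrow> inSl l (Kv a s t)"
  unfolding inSl_def Kv_def e_std_def
  by (auto intro!: inS_diff inS_mult inS_yv inS_uminus)

lemma span_zero: "(\<lambda>i. 0) \<in> S_span l G"
  unfolding S_span_def by (rule CollectI, rule exI[of _ "{}"]) auto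

lemma span_gen: "g \<in> G \<Longrightarrow> g \<in> S_span l G"
  unfolding S_span_def by (rule CollectI, rule exI[of _ "{g}"], rule exI[of _ "\<lambda>_. 1"]) auto

lemma span_add: assumes "u \<in> S_span l G" "v \<in> S_span l G" shows "(\<lambda>i. u i + v i) \<in> S_span l G"
proof -
  obtain F1 c1 where 1: "finite F1" "F1 \<subseteq> G" "\<forall>g\<in>F1. inS l (c1 g)" "u = (\<lambda>i. \<Sum>g\<in>F1. c1 g * g i)"
    using assms(1) unfolding S_span_def by blast
  obtain F2 c2 where 2: "finite F2" "F2 \<subseteq> G" "\<forall>g\<in>F2. inS l (c2 g)" "v = (\<lambda>i. \<Sum>g\<in>F2. c2 g * g i)"
    using assms(2) unfolding S_span_def by blast
  define c where "c g = (if g \<in> F1 then c1 g else 0) + (if g \<in> F2 then c2 g else 0)" for g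
  have e1: "(\<Sum>g\<in>F1 \<union> F2. (if g \<in> F1 then c1 g else 0) * g i) = (\<Sum>g\<in>F1. c1 g * g i)" for i
    by (rule sum.mono_neutral_cong_right) (use 1 2 in auto)
  have e2: "(\<Sum>g\<in>F1 \<union> F2. (if g \<in> F2 then c2 g else 0) * g i) = (\<Sum>g\<in>F2. c2 g * g i)" for i
    by (rule sum.mono_neutral_cong_right) (use 1 2 in auto)
  show ?thesis unfolding S_span_def
  proof (rule CollectI, intro exI conjI)
    show "finite (F1 \<union> F2)" "F1 \<union> F2 \<subseteq> G" using 1 2 by auto
    show "\<forall>g\<in>F1 \<union> F2. inS l (c g)" using 1 2 by (auto simp: c_def intro!: inS_add)
    show "(\<lambda>i. u i + v i) = (\<lambda>i. \<Sum>g\<in>F1 \<union> F2. c g * g i)"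
      by (simp add: c_def distrib_right sum.distrib e1 e2 1(4) 2(4))
  qed
qed

lemma span_smult: assumes "inS l c" "u \<in> S_span l G" shows "(\<lambda>i. c * u i) \<in> S_span l G"
proof -
  obtain F1 c1 where 1: "finite F1" "F1 \<subseteq> G" "\<forall>g\<in>F1. inS l (c1 g)" "u = (\<lambda>i. \<Sum>g\<in>F1. c1 g * g i)"
    using assms(2) unfolding S_span_def by blast
  show ?thesis unfolding S_span_def
  proof (rule CollectI, intro exI conjI)
    show "finite F1" "F1 \<subseteq> G" using 1 by auto
    show "\<forall>g\<in>F1. inS l (c * c1 g)" using 1 assms(1) by (auto intro!: inS_mult)
    show "(\<lambda>i. c * u i) = (\<lambda>i. \<Sum>g\<in>F1. (c * c1 g) * g i)"
      by (simp add: 1(4) sum_distrib_left mult.assoc)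
  qed
qed

lemma span_sum: "finite A \<Longrightarrow> (\<And>x. x \<in> A \<Longrightarrow> f x \<in> S_span l G) \<Longrightarrow> (\<lambda>i. \<Sum>x\<in>A. f x i) \<in> S_span l G"
proof (induction A rule: finite_induct)
  case empty then show ?case by (simp add: span_zero)
next
  case (insert x F)
  have "(\<lambda>i. f x i + (\<lambda>i. \<Sum>x\<in>F. f x i) i) \<in> S_span l G"
    by (rule span_add) (use insert in auto)
  then show ?case using insert.hyps by simp
qed


lemma yv_nz: "a i \<noteq> 0 \<Longrightarrow> yv a i \<noteq> 0"
  unfolding yv_def Const_Var by (metis lookup_single_eq lookup_zero)

lemma syz:
  assumes "finite J"
  shows "J \<subseteq> {1..l} \<Longrightarrow> (\<forall>i\<in>J. a i \<noteq> 0) \<Longrightarrow> (\<forall>i. i \<notin> J \<longrightarrow> w i = 0) \<Longrightarrow>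
    (\<forall>i. inS l (w i)) \<Longrightarrow> lin l a w = 0 \<Longrightarrow> w \<in> S_span l (Gset l a)"
  using assms
proof (induction J arbitrary: w rule: finite_induct)
  case empty
  then have "w = (\<lambda>i. 0)" by auto
  then show ?case by (simp add: span_zero)
next
  case (insert i0 J)
  note hyps = insert.prems
  have i0: "i0 \<in> {1..l}" "a i0 \<noteq> 0" using hyps by auto
  obtain q r where qr: "w i0 = (\<Sum>t\<in>J. Var t * q t) + r" "Poly_Mapping.keys r \<subseteq> Poly_Mapping.keys (w i0)"
    "nox J r" "\<forall>t. \<forall>m\<in>Poly_Mapping.keys (q t). \<exists>m'\<in>Poly_Mapping.keys (w i0). Poly_Mapping.keys m \<subseteq> Poly_Mapping.keys m'"
    using splitT[OF insert.hyps(1), of "w i0"] by blast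
  have inSq: "inS l (q t)" for t using qr(4) hyps(4) keys_bound_inS by blast
  have inSr: "inS l r" using qr(2) hyps(4) unfolding inS_def by blast
  define u where "u = (\<lambda>i. \<Sum>t\<in>J. (Const (1 / a t) * q t) * Kv a i0 t i)"
  have u_span: "u \<in> S_span l (Gset l a)"
    unfolding u_def
  proof (rule span_sum[OF insert.hyps(1)])
    fix t assume t: "t \<in> J"
    show "(\<lambda>i. (Const (1 / a t) * q t) * Kv a i0 t i) \<in> S_span l (Gset l a)"
      by (rule span_smult) (use t hyps i0 inSq in \<open>auto intro!: inS_mult span_gen Kv_in_G\<close>)
  qed
  have lin_u: "lin l a u = 0"
    unfolding u_def lin_sum lin_smult using hyps by (simp add: lin_Kv subset_iff)
  have inS_u: "inS l (u i)" for i
    unfolding u_def Kv_def e_std_def using hyps i0 inSq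
    by (auto intro!: inS_sum inS_mult inS_diff inS_yv inS_uminus)
  define w' where "w' = (\<lambda>i. w i - u i)"
  have ui0: "u i0 = (\<Sum>t\<in>J. Var t * q t)"
    unfolding u_def
  proof (rule sum.cong[OF refl])
    fix t assume t: "t \<in> J"
    then have "t \<noteq> i0" "a t \<noteq> 0" using insert.hyps hyps by auto
    then have "Const (1 / a t) * q t * Kv a i0 t i0 = (Const (1 / a t) * Const (a t)) * q t * Var t"
      by (simp add: Kv_def e_std_def yv_def algebra_simps)
    also have "\<dots> = Var t * q t" using \<open>a t \<noteq> 0\<close> by (simp only: Const_mult) (simp add: Const_def mult.commute)
    finally show "Const (1 / a t) * q t * Kv a i0 t i0 = Var t * q t" .
  qed
  have w'i0: "w' i0 = r" unfolding w'_def ui0 qr(1) by simp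
  have w'out: "w' i = 0" if "i \<notin> insert i0 J" for i
  proof -
    have "u i = 0" unfolding u_def Kv_def e_std_def using that by (auto intro!: sum.neutral)
    then show ?thesis using that hyps(3) by (simp add: w'_def)
  qed
  have lin_w': "lin l a w' = 0" unfolding w'_def lin_diff lin_u hyps(5) by simp
  have "lin l a w' = (\<Sum>i\<in>insert i0 J. w' i * yv a i)"
    unfolding lin_def by (rule sum.mono_neutral_right) (use hyps w'out in auto)
  also have "\<dots> = r * yv a i0 + (\<Sum>i\<in>J. w' i * yv a i)"
    using insert.hyps by (simp add: w'i0)
  finally have eq: "r * yv a i0 = - (\<Sum>i\<in>J. w' i * yv a i)" using lin_w'
    by (simp add: eq_neg_iff_add_eq_0)
  have "allx J (- (\<Sum>i\<in>J. w' i * yv a i))"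
  proof (rule allx_uminus, rule allx_sum)
    fix i assume "i \<in> J"
    then show "allx J (w' i * yv a i)"
      using allx_Var[of i J "w' i * Const (a i)"] by (simp add: yv_def mult.assoc)
  qed
  moreover have "nox J (r * yv a i0)"
    unfolding yv_def by (rule nox_yv) (use qr(3) insert.hyps in auto)
  ultimately have "r * yv a i0 = 0" using eq nox_allx by metis
  then have r0: "r = 0" using yv_nz[of a i0, OF i0(2)] by simp
  have "w' \<in> S_span l (Gset l a)"
  proof (rule insert.IH)
    show "J \<subseteq> {1..l}" "\<forall>i\<in>J. a i \<noteq> 0" using hyps by auto
    show "\<forall>i. i \<notin> J \<longrightarrow> w' i = 0" using w'out w'i0 r0 by (metis insert_iff)
    show "\<forall>i. inS l (w' i)" using hyps(4) inS_u by (auto simp: w'_def intro!: inS_diff)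
    show "lin l a w' = 0" by (fact lin_w')
  qed
  then have "(\<lambda>i. w' i + u i) \<in> S_span l (Gset l a)" using u_span by (rule span_add)
  then show ?case by (simp add: w'_def)
qed


lemma lin_form_yv: "lin_form l a = (\<Sum>i=1..l. yv a i)"
  by (simp add: lin_form_def yv_def)

lemma Mmod_iff: "v \<in> Mmod l a \<longleftrightarrow> inSl l v \<and> (\<exists>kj. inS l kj \<and> kj * lin_form l a = lin l a v)"
  by (simp add: Mmod_def lin_def yv_def)

lemma Mmod_zero: "(\<lambda>i. 0) \<in> Mmod l a"
  unfolding Mmod_iff by (auto simp: inSl_def lin_def intro!: exI[of _ 0])

lemma Mmod_add: assumes "u \<in> Mmod l a" "v \<in> Mmod l a" shows "(\<lambda>i. u i + v i) \<in> Mmod l a"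
proof -
  obtain k1 k2 where "inSl l u" "inS l k1" "k1 * lin_form l a = lin l a u"
    "inSl l v" "inS l k2" "k2 * lin_form l a = lin l a v"
    using assms unfolding Mmod_iff by blast
  then show ?thesis unfolding Mmod_iff
    by (auto simp: inSl_def lin_add distrib_right intro!: inS_add exI[of _ "k1 + k2"])
qed

lemma Mmod_smult: assumes "inS l c" "u \<in> Mmod l a" shows "(\<lambda>i. c * u i) \<in> Mmod l a"
proof -
  obtain k1 where "inSl l u" "inS l k1" "k1 * lin_form l a = lin l a u"
    using assms unfolding Mmod_iff by blast
  then show ?thesis unfolding Mmod_iff using assms(1)
    by (auto simp: inSl_def lin_smult mult.assoc intro!: inS_mult exI[of _ "c * k1"])
qed

lemma G_Mmod: assumes "g \<in> Gset l a" shows "g \<in> Mmod l a"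
proof -
  consider "g = e_all l" | r where "g = e_std r" "r \<in> {1..l}" "a r = 0"
    | s t where "g = Kv a s t" "s \<in> {1..l}" "t \<in> {1..l}"
    using assms unfolding Gset_def Kv_def yv_def by blast
  then show ?thesis
  proof cases
    case 1
    have "lin l a (e_all l) = lin_form l a"
      by (simp add: lin_def lin_form_yv e_all_def)
    then show ?thesis unfolding Mmod_iff 1
      by (auto simp: inSl_def e_all_def intro!: exI[of _ 1])
  next
    case 2
    have "lin l a (e_std r) = 0" using 2 by (simp add: lin_estd1 yv_def Const_def)
    then show ?thesis unfolding Mmod_iff 2(1) using 2
      by (auto simp: inSl_def e_std_def intro!: exI[of _ 0])
  next
    case 3
    then show ?thesis unfolding Mmod_iff 3(1)
      by (auto simp: inSl_Kv lin_Kv intro!: exI[of _ 0])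
  qed
qed

lemma span_Mmod: "S_span l (Gset l a) \<subseteq> Mmod l a"
proof
  fix v assume "v \<in> S_span l (Gset l a)"
  then obtain F c where F: "finite F" "F \<subseteq> Gset l a" "\<forall>g\<in>F. inS l (c g)" "v = (\<lambda>i. \<Sum>g\<in>F. c g * g i)"
    unfolding S_span_def by blast
  have "F \<subseteq> Gset l a \<Longrightarrow> (\<forall>g\<in>F. inS l (c g)) \<Longrightarrow> (\<lambda>i. \<Sum>g\<in>F. c g * g i) \<in> Mmod l a"
    using F(1)
  proof (induction F rule: finite_induct)
    case empty then show ?case by (simp add: Mmod_zero)
  next
    case (insert x F)
    have "(\<lambda>i. (\<lambda>i. c x * x i) i + (\<lambda>i. \<Sum>g\<in>F. c g * g i) i) \<in> Mmod l a"
      by (rule Mmod_add, rule Mmod_smult) (use insert G_Mmod in auto)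
    then show ?case using insert.hyps by simp
  qed
  then show "v \<in> Mmod l a" using F by simp
qed

lemma Mmod_span: "Mmod l a \<subseteq> S_span l (Gset l a)"
proof
  fix v assume "v \<in> Mmod l a"
  then obtain kj where v: "inSl l v" "inS l kj" "kj * lin_form l a = lin l a v"
    unfolding Mmod_iff by blast
  define J where "J = {i\<in>{1..l}. a i \<noteq> 0}"
  define R where "R = {i\<in>{1..l}. a i = 0}"
  define w where "w = (\<lambda>i. if i \<in> J then v i - kj else 0)"
  have "lin l a w = (\<Sum>i=1..l. (v i - kj) * yv a i)"
    unfolding lin_def w_def J_def by (rule sum.cong) (auto simp: yv_def Const_def)
  also have "\<dots> = lin l a v - kj * lin_form l a"
    by (simp add: lin_def lin_form_yv left_diff_distrib sum_subtractf sum_distrib_left)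
  finally have lw: "lin l a w = 0" using v(3) by simp
  have w_span: "w \<in> S_span l (Gset l a)"
    by (rule syz[of J]) (use v lw in \<open>auto simp: J_def w_def inSl_def intro!: inS_diff\<close>)
  have e_span: "(\<lambda>i. kj * e_all l i) \<in> S_span l (Gset l a)"
    by (rule span_smult[OF v(2)], rule span_gen) (simp add: Gset_def)
  have r_span: "(\<lambda>i. \<Sum>r\<in>R. (\<lambda>i. (v r - kj) * e_std r i) i) \<in> S_span l (Gset l a)"
  proof (rule span_sum)
    show "finite R" by (simp add: R_def)
    fix r assume r: "r \<in> R"
    show "(\<lambda>i. (v r - kj) * e_std r i) \<in> S_span l (Gset l a)"
      by (rule span_smult, rule inS_diff) (use r v in \<open>auto simp: R_def inSl_def Gset_def intro!: span_gen\<close>)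
  qed
  have sum_r: "(\<Sum>r\<in>R. (v r - kj) * e_std r i) = (if i \<in> R then v i - kj else 0)" for i
    by (simp add: e_std_def if_distrib[of "\<lambda>x. _ * x"] cong: if_cong) (simp add: sum.delta R_def)
  have "v = (\<lambda>i. (\<lambda>i. kj * e_all l i + (\<Sum>r\<in>R. (v r - kj) * e_std r i)) i + w i)"
  proof
    fix i show "v i = kj * e_all l i + (\<Sum>r\<in>R. (v r - kj) * e_std r i) + w i"
      unfolding sum_r using v(1) by (auto simp: e_all_def w_def R_def J_def inSl_def)
  qed
  also have "\<dots> \<in> S_span l (Gset l a)"
    by (rule span_add[OF span_add[OF e_span r_span] w_span])
  finally show "v \<in> S_span l (Gset l a)" .
qed

theorem lemma2p4:
  fixes l :: nat and a :: "nat \<Rightarrow> 'a::field"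
  assumes "lin_form l a \<noteq> 0"
  shows "Mmod l a = S_span l (Gset l a)"
  using Mmod_span span_Mmod by blast

end
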